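(* A CRN protocol $\Pi=(\mathcal{S},\mathcal{R})$ is stably (resp. haltingly) correct with respect to an interface $\mathcal{I}=(\mathcal{U},\mu,\mathcal{C})$ under a weakly fair scheduler if and only if for every valid initial configuration $\mathbf{c}^0$, every strongly connected component $S$ of $D^{\Pi}_{\mathbf{c}^0}$ satisfies at least one of: (1) some reaction of $\mathcal{R}$ escapes from $S$; or (2) $S\subseteq\mathrm{stab}(Z_{\mathcal{I}}(\mathbf{c}^0))$ (resp. $S\subseteq\mathrm{halt}(Z_{\mathcal{I}}(\mathbf{c}^0))$), where $Z_{\mathcal{I}}(\mathbf{c}^0)=\{\mathbf{c}\in\mathbb{N}^{\mathcal{S}}:(\mu(\mathbf{c}^0),\mu(\mathbf{c}))\in\mathcal{C}\}$.
   Context: CRN protocol $\Pi=(\mathcal{S},\mathcal{R})$: $\mathcal{S}$ finite set of species, $\mathcal{R}\subset\mathbb{N}^{\mathcal{S}}\times\mathbb{N}^{\mathcal{S}}$ finite set of reactions $(\mathbf{r},\mathbf{p})$ with $\|\mathbf{r}\|_1\in\{1,2\}$, $\|\mathbf{r}\|_1\le\|\mathbf{p}\|_1$, every $\mathbf{r}$ with $1\le\|\mathbf{r}\|_1\le2$ is the reactant vector of at least one reaction, void reactions are those with $\mathbf{r}=\mathbf{p}$ (and a void reaction is then the only reaction with reactants $\mathbf{r}$). Configurations are $\mathbf{c}\in\mathbb{N}^{\mathcal{S}}$ with $\|\mathbf{c}\|_1\ge1$; $(\mathbf{r},\mathbf{p})$ is applicable to $\mathbf{c}$ if $\mathbf{r}\le\mathbf{c}$,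 giving $\alpha(\mathbf{c})=\mathbf{c}-\mathbf{r}+\mathbf{p}$; $\operatorname{app}(\mathbf{c})$ is the set of applicable reactions; $\mathbf{c}\stackrel{*}{\rightharpoonup}\mathbf{c}'$ means $\mathbf{c}'$ is reachable by a finite sequence of applicable reactions. The protocol respects finite density ($\mathbf{c}\stackrel{*}{\rightharpoonup}\mathbf{c}'$ implies $\|\mathbf{c}'\|_1\le O(\|\mathbf{c}\|_1)$). For $Z\subseteq\mathbb{N}^{\mathcal{S}}$: $\mathrm{stab}(Z)=\{\mathbf{c}\in Z:\mathbf{c}\stackrel{*}{\rightharpoonup}\mathbf{c}'\Rightarrow\mathbf{c}'\in Z\}$, $\mathrm{halt}(Z)=\{\mathbf{c}\in Z:\mathbf{c}\stackrel{*}{\rightharpoonup}\mathbf{c}'\Rightarrow\mathbf{c}'=\mathbf{c}\}$. The configuration digraph $D^{\Pi}$ has an $\alpha$-labeled edge $\mathbf{c}\to\alpha(\mathbf{c})$ for each $\alpha\in\operatorname{app}(\mathbf{c})$; $D^{\Pi}_{\mathbf{c}}$ is its subgraph induced on configurations reachable from $\mathbf{c}$. A reaction $\alpha$ escapes from a component $S$ if $\alpha\in\operatorname{app}(\mathbf{c})$ and $\alpha(\mathbf{c})\notin S$ for all $\mathbf{c}\in S$. An execution is $\langle\mathbf{c}^t,\alpha^t\rangle_{t\ge0}$ with $\alpha^t\in\operatorname{app}(\mathbf{c}^t)$, $\mathbf{c}^{t+1}=\alpha^t(\mathbf{c}^t)$; it is weakly fair if for every $t$ and $\alpha\in\operatorname{app}(\mathbf{c}^t)$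 there is $t'\ge t$ with $\alpha^{t'}=\alpha$ or $\alpha\notin\operatorname{app}(\mathbf{c}^{t'})$; it stabilizes (resp. halts) into $Z$ if $\mathbf{c}^t\in\mathrm{stab}(Z)$ (resp. $\mathrm{halt}(Z)$) for some $t$. An interface $\mathcal{I}=(\mathcal{U},\mu,\mathcal{C})$ consists of a set $\mathcal{U}$, a map $\mu:\mathcal{S}\to\mathcal{U}$ and a relation $\mathcal{C}\subseteq\mathbb{N}^{\mathcal{U}}\times\mathbb{N}^{\mathcal{U}}$, with $\mu(\mathbf{c})(u)=\sum_{A:\mu(A)=u}\mathbf{c}(A)$. A configuration $\mathbf{c}^0$ is a valid initial configuration if $Z_{\mathcal{I}}(\mathbf{c}^0)\neq\emptyset$. $\Pi$ is stably (resp. haltingly) correct w.r.t. $\mathcal{I}$ under a weakly fair scheduler if every weakly fair execution from a valid initial configuration $\mathbf{c}^0$ stabilizes (resp. halts) into $Z_{\mathcal{I}}(\mathbf{c}^0)$. *)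

theory Defs
  imports Main
begin

type_synonym 's cfg = "'s \<Rightarrow> nat"
type_synonym 's reaction = "'s cfg \<times> 's cfg"

definition norm1 :: "('s::finite) cfg \<Rightarrow> nat" where
  "norm1 c = (\<Sum>s\<in>UNIV. c s)"

definition crn_protocol :: "('s::finite) reaction set \<Rightarrow> bool" where
  "crn_protocol R \<longleftrightarrow>
     finite R \<and>
     (\<forall>(r,p)\<in>R. (norm1 r = 1 \<or> norm1 r = 2) \<and> norm1 r \<le> norm1 p) \<and>
     (\<forall>r. (norm1 r = 1 \<or> norm1 r = 2) \<longrightarrow> (\<exists>p. (r,p) \<in> R)) \<and>
     (\<forall>(r,p)\<in>R. r = p \<longrightarrow> (\<forall>q. (r,q) \<in> R \<longrightarrow> q = r))"

definition applicable :: "'s reaction \<Rightarrow> 's cfg \<Rightarrow> bool" where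
  "applicable \<alpha> c \<longleftrightarrow> (\<forall>s. fst \<alpha> s \<le> c s)"

definition apply_rxn :: "'s reaction \<Rightarrow> 's cfg \<Rightarrow> 's cfg" where
  "apply_rxn \<alpha> c = (\<lambda>s. c s - fst \<alpha> s + snd \<alpha> s)"

definition app :: "'s reaction set \<Rightarrow> 's cfg \<Rightarrow> 's reaction set" where
  "app R c = {\<alpha> \<in> R. applicable \<alpha> c}"

definition step :: "'s reaction set \<Rightarrow> 's cfg \<Rightarrow> 's cfg \<Rightarrow> bool" where
  "step R c c' \<longleftrightarrow> (\<exists>\<alpha>\<in>app R c. c' = apply_rxn \<alpha> c)"

definition reach :: "'s reaction set \<Rightarrow> 's cfg \<Rightarrow> 's cfg \<Rightarrow> bool" where
  "reach R = (step R)\<^sup>*\<^sup>*"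

definition finite_density :: "('s::finite) reaction set \<Rightarrow> bool" where
  "finite_density R \<longleftrightarrow> (\<exists>K::nat. \<forall>c c'. reach R c c' \<longrightarrow> norm1 c' \<le> K * norm1 c)"

definition stab :: "'s reaction set \<Rightarrow> 's cfg set \<Rightarrow> 's cfg set" where
  "stab R Z = {c \<in> Z. \<forall>c'. reach R c c' \<longrightarrow> c' \<in> Z}"

definition halt :: "'s reaction set \<Rightarrow> 's cfg set \<Rightarrow> 's cfg set" where
  "halt R Z = {c \<in> Z. \<forall>c'. reach R c c' \<longrightarrow> c' = c}"

definition is_scc :: "'s reaction set \<Rightarrow> 's cfg \<Rightarrow> 's cfg set \<Rightarrow> bool" where
  "is_scc R c0 S \<longleftrightarrow>
     S \<noteq> {} \<and> (\<forall>c\<in>S. reach R c0 c) \<and>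
     (\<forall>c\<in>S. \<forall>c'\<in>S. reach R c c') \<and>
     (\<forall>c\<in>S. \<forall>c'. reach R c0 c' \<and> reach R c c' \<and> reach R c' c \<longrightarrow> c' \<in> S)"

definition escapes :: "'s reaction \<Rightarrow> 's cfg set \<Rightarrow> bool" where
  "escapes \<alpha> S \<longleftrightarrow> (\<forall>c\<in>S. applicable \<alpha> c \<and> apply_rxn \<alpha> c \<notin> S)"

text \<open>Interface (U, mu, C): U is the type 'u.\<close>
definition mu_cfg :: "('s::finite \<Rightarrow> 'u) \<Rightarrow> 's cfg \<Rightarrow> ('u \<Rightarrow> nat)" where
  "mu_cfg \<mu> c = (\<lambda>u. \<Sum>A\<in>{A. \<mu> A = u}. c A)"

definition Zset :: "('s::finite \<Rightarrow> 'u) \<Rightarrow> (('u \<Rightarrow> nat) \<times> ('u \<Rightarrow> nat)) set \<Rightarrow> 's cfg \<Rightarrow> 's cfg set" where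
  "Zset \<mu> C c0 = {c. (mu_cfg \<mu> c0, mu_cfg \<mu> c) \<in> C}"

definition valid_init :: "('s::finite \<Rightarrow> 'u) \<Rightarrow> (('u \<Rightarrow> nat) \<times> ('u \<Rightarrow> nat)) set \<Rightarrow> 's cfg \<Rightarrow> bool" where
  "valid_init \<mu> C c0 \<longleftrightarrow> norm1 c0 \<ge> 1 \<and> Zset \<mu> C c0 \<noteq> {}"

definition is_execution :: "'s reaction set \<Rightarrow> (nat \<Rightarrow> 's cfg) \<Rightarrow> (nat \<Rightarrow> 's reaction) \<Rightarrow> bool" where
  "is_execution R c a \<longleftrightarrow> (\<forall>t. a t \<in> app R (c t) \<and> c (Suc t) = apply_rxn (a t) (c t))"

definition weakly_fair :: "'s reaction set \<Rightarrow> (nat \<Rightarrow> 's cfg) \<Rightarrow> (nat \<Rightarrow> 's reaction) \<Rightarrow> bool" where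
  "weakly_fair R c a \<longleftrightarrow>
     (\<forall>t. \<forall>\<alpha>\<in>app R (c t). \<exists>t'\<ge>t. a t' = \<alpha> \<or> \<alpha> \<notin> app R (c t'))"

definition stably_correct :: "('s::finite) reaction set \<Rightarrow> ('s \<Rightarrow> 'u) \<Rightarrow> (('u \<Rightarrow> nat) \<times> ('u \<Rightarrow> nat)) set \<Rightarrow> bool" where
  "stably_correct R \<mu> C \<longleftrightarrow>
     (\<forall>c a. is_execution R c a \<and> weakly_fair R c a \<and> valid_init \<mu> C (c 0) \<longrightarrow>
        (\<exists>t. c t \<in> stab R (Zset \<mu> C (c 0))))"

definition haltingly_correct :: "('s::finite) reaction set \<Rightarrow> ('s \<Rightarrow> 'u) \<Rightarrow> (('u \<Rightarrow> nat) \<times> ('u \<Rightarrow> nat)) set \<Rightarrow> bool" where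
  "haltingly_correct R \<mu> C \<longleftrightarrow>
     (\<forall>c a. is_execution R c a \<and> weakly_fair R c a \<and> valid_init \<mu> C (c 0) \<longrightarrow>
        (\<exists>t. c t \<in> halt R (Zset \<mu> C (c 0))))"

end

theory Submission
  imports Defs
begin

lemma reach_step: "step R x y \<Longrightarrow> reach R x y"
  unfolding reach_def by auto

lemma reach_trans: "reach R x y \<Longrightarrow> reach R y z \<Longrightarrow> reach R x z"
  unfolding reach_def by auto

lemma reach_refl: "reach R x x"
  unfolding reach_def by auto

lemma step_apply: "\<beta> \<in> app R x \<Longrightarrow> step R x (apply_rxn \<beta> x)"
  unfolding step_def by auto

lemma norm1_apply:
  fixes c :: "('s::finite) cfg"
  assumes "applicable \<alpha> c"
  shows "norm1 (apply_rxn \<alpha> c) + norm1 (fst \<alpha>) = norm1 c + norm1 (snd \<alpha>)"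
proof -
  have "norm1 (apply_rxn \<alpha> c) + norm1 (fst \<alpha>) = (\<Sum>s\<in>UNIV. apply_rxn \<alpha> c s + fst \<alpha> s)"
    unfolding norm1_def by (simp add: sum.distrib)
  also have "\<dots> = (\<Sum>s\<in>UNIV. c s + snd \<alpha> s)"
  proof (intro sum.cong refl)
    fix s
    have "fst \<alpha> s \<le> c s" using assms unfolding applicable_def by auto
    then show "apply_rxn \<alpha> c s + fst \<alpha> s = c s + snd \<alpha> s" unfolding apply_rxn_def by simp
  qed
  also have "\<dots> = norm1 c + norm1 (snd \<alpha>)"
    unfolding norm1_def by (simp add: sum.distrib)
  finally show ?thesis .
qed

lemma norm1_step:
  fixes x :: "('s::finite) cfg"
  assumes "crn_protocol R" "step R x y"
  shows "norm1 x \<le> norm1 y"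
proof -
  obtain \<alpha> where a: "\<alpha> \<in> R" "applicable \<alpha> x" "y = apply_rxn \<alpha> x"
    using assms(2) unfolding step_def app_def by auto
  have "norm1 (fst \<alpha>) \<le> norm1 (snd \<alpha>)"
    using assms(1) a(1) unfolding crn_protocol_def by (cases \<alpha>) auto
  then show ?thesis using norm1_apply[OF a(2)] a(3) by simp
qed

lemma norm1_reach:
  fixes x :: "('s::finite) cfg"
  assumes "crn_protocol R" "reach R x y"
  shows "norm1 x \<le> norm1 y"
  using assms(2) unfolding reach_def
  by (induction rule: rtranclp_induct) (auto dest: norm1_step[OF assms(1)])

lemma app_nonempty:
  fixes x :: "('s::finite) cfg"
  assumes "crn_protocol R" "norm1 x \<ge> 1"
  shows "\<exists>\<beta>. \<beta> \<in> app R x"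
proof -
  obtain s where s: "x s \<ge> 1"
  proof (rule ccontr)
    assume "\<not> thesis"
    with that have "\<forall>s. x s = 0" by (metis less_one not_le)
    then have "norm1 x = 0" unfolding norm1_def by simp
    with assms(2) show False by simp
  qed
  define r where "r = (\<lambda>t. if t = s then 1 else (0::nat))"
  have "norm1 r = 1" unfolding norm1_def r_def by simp
  then obtain p where "(r, p) \<in> R" using assms(1) unfolding crn_protocol_def by blast
  moreover have "applicable (r, p) x" unfolding applicable_def r_def using s by auto
  ultimately show ?thesis unfolding app_def by auto
qed

definition dist_r :: "'s reaction set \<Rightarrow> 's cfg \<Rightarrow> 's cfg \<Rightarrow> nat" where
  "dist_r R x y = (LEAST n. (step R ^^ n) x y)"

lemma descent:
  assumes "reach R x y" "x \<noteq> y"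
  shows "\<exists>\<beta>\<in>app R x. reach R (apply_rxn \<beta> x) y \<and> dist_r R (apply_rxn \<beta> x) y < dist_r R x y"
proof -
  have ex: "\<exists>n. (step R ^^ n) x y" using assms(1) unfolding reach_def rtranclp_power .
  define n where "n = dist_r R x y"
  have hn: "(step R ^^ n) x y" unfolding n_def dist_r_def by (rule LeastI_ex[OF ex])
  have "n \<noteq> 0"
  proof
    assume "n = 0"
    then have "x = y" using hn by simp
    then show False using assms(2) by simp
  qed
  then obtain m where m: "n = Suc m" using not0_implies_Suc by blast
  have hm: "(step R ^^ Suc m) x y" using hn m by simp
  obtain z where z: "step R x z" "(step R ^^ m) z y" using relpowp_Suc_D2[OF hm] by blast
  obtain \<beta> where b: "\<beta> \<in> app R x" "z = apply_rxn \<beta> x" using z(1) unfolding step_def by auto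
  have "reach R z y" using z(2) unfolding reach_def rtranclp_power by blast
  moreover have "dist_r R z y \<le> m" unfolding dist_r_def by (rule Least_le, rule z(2))
  ultimately show ?thesis using b m n_def by auto
qed

lemma scc_D:
  assumes "is_scc R c0 S"
  shows "S \<noteq> {}" "\<And>y. y \<in> S \<Longrightarrow> reach R c0 y"
    "\<And>y z. y \<in> S \<Longrightarrow> z \<in> S \<Longrightarrow> reach R y z"
    "\<And>y z. y \<in> S \<Longrightarrow> reach R c0 z \<Longrightarrow> reach R y z \<Longrightarrow> reach R z y \<Longrightarrow> z \<in> S"
  using assms unfolding is_scc_def by blast+

lemma has_step_in_S:
  fixes R :: "('s::finite) reaction set"
  assumes cp: "crn_protocol R" and scc: "is_scc R c0 S" and ne: "\<not> (\<exists>\<alpha>\<in>R. escapes \<alpha> S)"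
    and n0: "norm1 c0 \<ge> 1" and x: "x \<in> S"
  shows "\<exists>\<beta>\<in>app R x. apply_rxn \<beta> x \<in> S"
proof (cases "\<exists>y\<in>S. y \<noteq> x")
  case True
  then obtain y where y: "y \<in> S" "y \<noteq> x" by blast
  have "reach R x y" using scc_D(3)[OF scc x y(1)] .
  from descent[OF this y(2)[symmetric]] obtain \<beta> where b: "\<beta>\<in>app R x" "reach R (apply_rxn \<beta> x) y" by blast
  have "apply_rxn \<beta> x \<in> S"
  proof -
    have r0: "reach R c0 x" using scc_D(2)[OF scc x] .
    have st: "reach R x (apply_rxn \<beta> x)" using reach_step[OF step_apply[OF b(1)]] .
    have "reach R y x" using scc_D(3)[OF scc y(1) x] .
    then have "reach R (apply_rxn \<beta> x) x" using reach_trans[OF b(2)] by blast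
    moreover have "reach R c0 (apply_rxn \<beta> x)" using reach_trans[OF r0 st] .
    ultimately show ?thesis using scc_D(4)[OF scc x _ st] by blast
  qed
  then show ?thesis using b by blast
next
  case False
  then have S: "S = {x}" using x by blast
  have "norm1 c0 \<le> norm1 x" using norm1_reach[OF cp scc_D(2)[OF scc x]] .
  then obtain \<beta> where b: "\<beta> \<in> app R x" using app_nonempty[OF cp] n0 by fastforce
  then have "\<beta> \<in> R" "applicable \<beta> x" unfolding app_def by auto
  then have "apply_rxn \<beta> x \<in> S" using ne S unfolding escapes_def by blast
  then show ?thesis using b by blast
qed

lemma fair_exec:
  fixes R :: "('s::finite) reaction set"
  assumes cp: "crn_protocol R" and scc: "is_scc R c0 S" and ne: "\<not> (\<exists>\<alpha>\<in>R. escapes \<alpha> S)"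
    and n0: "norm1 c0 \<ge> 1"
  shows "\<exists>c a. is_execution R c a \<and> weakly_fair R c a \<and> c 0 = c0 \<and> (\<forall>t. \<exists>y\<in>S. reach R (c t) y)"
proof -
  have finR: "finite R" using cp unfolding crn_protocol_def by auto
  obtain xs where xs: "set xs = R" using finite_list[OF finR] by blast
  define L where "L = length xs"
  obtain \<beta>0 where "\<beta>0 \<in> app R c0" using app_nonempty[OF cp n0] by blast
  then have Rne: "R \<noteq> {}" unfolding app_def by auto
  have L0: "L > 0" using xs Rne L_def by auto
  define e where "e n = xs ! (n mod L)" for n
  have eR: "e n \<in> R" for n unfolding e_def using xs L0 L_def by auto
  have wex: "\<exists>y. y \<in> S \<and> (\<not> applicable (e n) y \<or> apply_rxn (e n) y \<in> S)" for n
    using ne eR[of n] unfolding escapes_def by blast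
  define w where "w n = (SOME y. y \<in> S \<and> (\<not> applicable (e n) y \<or> apply_rxn (e n) y \<in> S))" for n
  have wS: "w n \<in> S" and wP: "\<not> applicable (e n) (w n) \<or> apply_rxn (e n) (w n) \<in> S" for n
    using someI_ex[OF wex[of n]] unfolding w_def by auto
  note S0 = scc_D(2)[OF scc] and SS = scc_D(3)[OF scc]
  define rx where "rx s = (if fst s = w (snd s) then
        (if applicable (e (snd s)) (fst s) then e (snd s)
         else (SOME \<beta>. \<beta> \<in> app R (fst s) \<and> apply_rxn \<beta> (fst s) \<in> S))
      else (SOME \<beta>. \<beta> \<in> app R (fst s) \<and> reach R (apply_rxn \<beta> (fst s)) (w (snd s))
              \<and> dist_r R (apply_rxn \<beta> (fst s)) (w (snd s)) < dist_r R (fst s) (w (snd s))))" for s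
  define nph where "nph s = (if fst s = w (snd s) then Suc (snd s) else snd s)" for s
  have keyl: "rx (x,n) \<in> app R x \<and> reach R c0 (apply_rxn (rx (x,n)) x)
       \<and> reach R (apply_rxn (rx (x,n)) x) (w (nph (x,n)))
       \<and> (x \<noteq> w n \<longrightarrow> nph (x,n) = n \<and> dist_r R (apply_rxn (rx (x,n)) x) (w n) < dist_r R x (w n))
       \<and> (x = w n \<longrightarrow> nph (x,n) = Suc n \<and> (rx (x,n) = e n \<or> \<not> applicable (e n) x))"
    if hx: "reach R c0 x" "reach R x (w n)" for x n
  proof (cases "x = w n")
    case True
    then have xS: "x \<in> S" using wS by simp
    obtain \<beta> where b: "rx (x,n) = \<beta>" "\<beta> \<in> app R x" "apply_rxn \<beta> x \<in> S"
        "\<beta> = e n \<or> \<not> applicable (e n) x"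
    proof (cases "applicable (e n) x")
      case True2: True
      have "apply_rxn (e n) x \<in> S" using wP[of n] True2 \<open>x = w n\<close> by auto
      moreover have "e n \<in> app R x" using eR True2 unfolding app_def by auto
      ultimately show ?thesis using that True True2 unfolding rx_def by auto
    next
      case False2: False
      have "\<exists>\<beta>. \<beta> \<in> app R x \<and> apply_rxn \<beta> x \<in> S"
        using has_step_in_S[OF cp scc ne n0 xS] by auto
      from someI_ex[OF this] show ?thesis using that True False2 unfolding rx_def by auto
    qed
    show ?thesis using b True S0 SS wS unfolding nph_def by auto
  next
    case False
    have "\<exists>\<beta>. \<beta> \<in> app R x \<and> reach R (apply_rxn \<beta> x) (w n) \<and> dist_r R (apply_rxn \<beta> x) (w n) < dist_r R x (w n)"
      using descent[OF hx(2) False] by auto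
    from someI_ex[OF this] have b: "rx (x,n) \<in> app R x" "reach R (apply_rxn (rx (x,n)) x) (w n)"
        "dist_r R (apply_rxn (rx (x,n)) x) (w n) < dist_r R x (w n)"
      using False unfolding rx_def by auto
    have "reach R c0 (apply_rxn (rx (x,n)) x)"
      using reach_trans[OF hx(1) reach_step[OF step_apply[OF b(1)]]] .
    then show ?thesis using b False unfolding nph_def by auto
  qed
  define st where "st = rec_nat (c0, 0::nat) (\<lambda>_ s. (apply_rxn (rx s) (fst s), nph s))"
  define c where "c t = fst (st t)" for t
  define a where "a t = rx (st t)" for t
  define ph where "ph t = snd (st t)" for t
  have c0: "c 0 = c0" "ph 0 = 0" unfolding c_def ph_def st_def by simp_all
  have cS: "c (Suc t) = apply_rxn (a t) (c t)" "ph (Suc t) = nph (c t, ph t)" "a t = rx (c t, ph t)" for t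
    unfolding c_def ph_def a_def st_def by simp_all
  have inv: "reach R c0 (c t) \<and> reach R (c t) (w (ph t))" for t
  proof (induction t)
    case 0
    then show ?case using c0 reach_refl S0 wS by auto
  next
    case (Suc t)
    then show ?case using keyl[of "c t" "ph t"] cS by auto
  qed
  note K = keyl[OF inv[THEN conjunct1] inv[THEN conjunct2], folded cS]
  have exe: "is_execution R c a" unfolding is_execution_def using K cS by auto
  have A: "\<exists>t'\<ge>t. c t' = w (ph t') \<and> ph t' = ph t" for t
  proof (induction "dist_r R (c t) (w (ph t))" arbitrary: t rule: less_induct)
    case less
    show ?case
    proof (cases "c t = w (ph t)")
      case True
      then show ?thesis by auto
    next
      case False
      then have "ph (Suc t) = ph t" "dist_r R (c (Suc t)) (w (ph t)) < dist_r R (c t) (w (ph t))"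
        using K[of t] cS[of t] by auto
      then obtain t' where "t' \<ge> Suc t" "c t' = w (ph t') \<and> ph t' = ph (Suc t)"
        using less[of "Suc t"] by auto
      then show ?thesis using \<open>ph (Suc t) = ph t\<close> by (intro exI[of _ t']) auto
    qed
  qed
  have B: "\<exists>t'\<ge>t. ph t' = ph t + m" for m t
  proof (induction m arbitrary: t)
    case 0
    then show ?case by auto
  next
    case (Suc m)
    obtain t1 where t1: "t1 \<ge> t" "ph t1 = ph t + m" using Suc by blast
    obtain t2 where t2: "t2 \<ge> t1" "c t2 = w (ph t2)" "ph t2 = ph t1" using A[of t1] by blast
    have "ph (Suc t2) = Suc (ph t2)" using K[of t2] cS[of t2] t2 by auto
    then show ?case using t1 t2 by (intro exI[of _ "Suc t2"]) auto
  qed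
  have fair: "weakly_fair R c a" unfolding weakly_fair_def
  proof (intro allI ballI)
    fix t \<alpha> assume "\<alpha> \<in> app R (c t)"
    then have "\<alpha> \<in> set xs" using xs unfolding app_def by auto
    then obtain i where i: "i < L" "xs ! i = \<alpha>" unfolding L_def in_set_conv_nth by auto
    define n where "n = ph t * L + i"
    have "ph t * 1 \<le> ph t * L" using L0 by (intro mult_le_mono2) simp
    then have "n \<ge> ph t" unfolding n_def by (metis le_add1 le_trans mult.right_neutral)
    then obtain t1 where t1: "t1 \<ge> t" "ph t1 = n" using B[of t "n - ph t"] by auto
    obtain t2 where t2: "t2 \<ge> t1" "c t2 = w (ph t2)" "ph t2 = ph t1" using A[of t1] by blast
    have en: "e n = \<alpha>" unfolding e_def n_def using i by simp
    have "a t2 = \<alpha> \<or> \<not> applicable \<alpha> (c t2)" using K[of t2] t2 t1 en by auto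
    then show "\<exists>t'\<ge>t. a t' = \<alpha> \<or> \<alpha> \<notin> app R (c t')"
      using t1 t2 unfolding app_def by (intro exI[of _ t2]) auto
  qed
  have rs: "\<forall>t. \<exists>y\<in>S. reach R (c t) y" using inv wS by blast
  show ?thesis
    by (rule exI[of _ c], rule exI[of _ a]) (intro conjI exe fair c0(1) rs)
qed

lemma finite_bounded_cfgs:
  "finite {c :: ('s::finite) cfg. \<forall>s. c s \<le> B}"
proof -
  have "finite {f :: 's cfg. \<forall>x. (x \<in> UNIV \<longrightarrow> f x \<in> {0..B}) \<and> (x \<notin> UNIV \<longrightarrow> f x = 0)}"
    by (rule finite_set_of_finite_funs) auto
  then show ?thesis by simp
qed

lemma exec_reach:
  assumes ex: "is_execution R c a"
  shows "reach R (c t) (c (t + m))"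
proof (induction m)
  case 0
  then show ?case by (simp add: reach_refl)
next
  case (Suc m)
  have "step R (c (t+m)) (c (Suc (t + m)))" using ex unfolding is_execution_def step_def by blast
  then have "reach R (c (t+m)) (c (t + Suc m))" using reach_step by simp
  then show ?case using Suc.IH reach_trans by blast
qed

lemma exec_reaches_P:
  fixes R :: "('s::finite) reaction set"
  assumes fd: "finite_density R" and ex: "is_execution R c a" and wf: "weakly_fair R c a"
    and H: "\<forall>S. is_scc R (c 0) S \<longrightarrow> (\<exists>\<alpha>\<in>R. escapes \<alpha> S) \<or> S \<subseteq> P"
  shows "\<exists>t. c t \<in> P"
proof -
  obtain K where K: "\<forall>x y. reach R x y \<longrightarrow> norm1 y \<le> K * norm1 x" using fd unfolding finite_density_def by blast
  have r0: "reach R (c 0) (c t)" for t using exec_reach[OF ex, of 0 t] by simp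
  have "range c \<subseteq> {x. \<forall>s. x s \<le> K * norm1 (c 0)}"
  proof safe
    fix t s
    have "c t s \<le> norm1 (c t)" unfolding norm1_def by (rule member_le_sum) auto
    also have "\<dots> \<le> K * norm1 (c 0)" using K r0 by blast
    finally show "c t s \<le> K * norm1 (c 0)" .
  qed
  then have fr: "finite (range c)" using finite_bounded_cfgs finite_subset by blast
  define J where "J = {y \<in> range c. finite {t. c t = y}}"
  have eqJ: "{t. c t \<in> J} = (\<Union>y\<in>J. {t. c t = y})" by blast
  have fJ: "finite J" by (rule finite_subset[OF _ fr]) (auto simp: J_def)
  have "finite (\<Union>y\<in>J. {t. c t = y})"
  proof (rule finite_UN_I[OF fJ])
    fix y assume "y \<in> J" then show "finite {t. c t = y}" unfolding J_def by blast
  qed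
  then have "finite {t. c t \<in> J}" unfolding eqJ .
  then obtain n where n: "\<forall>t\<in>{t. c t \<in> J}. t \<le> n" unfolding finite_nat_set_iff_bounded_le by blast
  define T where "T = Suc n"
  have T: "c t \<notin> J" if "t \<ge> T" for t
  proof
    assume "c t \<in> J" then have "t \<le> n" using n by blast
    then show False using that T_def by simp
  qed
  have inf: "\<exists>t'\<ge>t. c t' = c t0" if "t0 \<ge> T" for t t0
  proof -
    have "c t0 \<notin> J" using T that .
    then have "infinite {t'. c t' = c t0}" unfolding J_def by blast
    show ?thesis
    proof (rule ccontr)
      assume "\<not> ?thesis"
      then have "{t'. c t' = c t0} \<subseteq> {..<t}" by (auto simp: not_le)
      then show False using finite_subset \<open>infinite {t'. c t' = c t0}\<close> by blast
    qed
  qed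
  define S where "S = {y. reach R (c 0) y \<and> reach R (c T) y \<and> reach R y (c T)}"
  have inS: "c t \<in> S" if "t \<ge> T" for t
  proof -
    have "reach R (c T) (c t)" using exec_reach[OF ex, of T "t - T"] that by simp
    moreover obtain t' where "t' \<ge> t" "c t' = c T" using inf[of T t] by auto
    then have "reach R (c t) (c T)" using exec_reach[OF ex, of t "t' - t"] by simp
    ultimately show ?thesis unfolding S_def using r0 by auto
  qed
  have scc: "is_scc R (c 0) S"
    unfolding is_scc_def
  proof (intro conjI ballI allI impI)
    show "S \<noteq> {}" using inS[of T] by auto
  next
    fix x assume "x \<in> S" then show "reach R (c 0) x" unfolding S_def by auto
  next
    fix x y assume "x \<in> S" "y \<in> S" then show "reach R x y" unfolding S_def using reach_trans by blast
  next
    fix x y assume "x \<in> S" "reach R (c 0) y \<and> reach R x y \<and> reach R y x"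
    then show "y \<in> S" unfolding S_def using reach_trans by blast
  qed
  have "\<not> (\<exists>\<alpha>\<in>R. escapes \<alpha> S)"
  proof
    assume "\<exists>\<alpha>\<in>R. escapes \<alpha> S"
    then obtain \<alpha> where a: "\<alpha> \<in> R" "escapes \<alpha> S" by blast
    have "\<alpha> \<in> app R (c T)" using a inS[of T] unfolding escapes_def app_def by auto
    then obtain t' where t': "t' \<ge> T" "a t' = \<alpha> \<or> \<alpha> \<notin> app R (c t')" using wf unfolding weakly_fair_def by blast
    have "\<alpha> \<in> app R (c t')" using a inS[OF t'(1)] unfolding escapes_def app_def by auto
    then have "a t' = \<alpha>" using t' by auto
    then have "c (Suc t') = apply_rxn \<alpha> (c t')" using ex unfolding is_execution_def by auto
    then have "c (Suc t') \<notin> S" using a inS[OF t'(1)] unfolding escapes_def by auto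
    moreover have "c (Suc t') \<in> S" using inS t'(1) by auto
    ultimately show False by auto
  qed
  then have "S \<subseteq> P" using H scc by blast
  then show ?thesis using inS[of T] by auto
qed

lemma generic_iff:
  fixes R :: "('s::finite) reaction set" and Pf :: "'s cfg \<Rightarrow> 's cfg set"
  assumes cp: "crn_protocol R" and fd: "finite_density R"
    and cl: "\<And>c0 x y. x \<in> Pf c0 \<Longrightarrow> reach R x y \<Longrightarrow> y \<in> Pf c0"
  shows "(\<forall>c a. is_execution R c a \<and> weakly_fair R c a \<and> valid_init \<mu> C (c 0) \<longrightarrow> (\<exists>t. c t \<in> Pf (c 0)))
     \<longleftrightarrow> (\<forall>c0. valid_init \<mu> C c0 \<longrightarrow> (\<forall>S. is_scc R c0 S \<longrightarrow> (\<exists>\<alpha>\<in>R. escapes \<alpha> S) \<or> S \<subseteq> Pf c0))"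
proof
  assume corr: "\<forall>c a. is_execution R c a \<and> weakly_fair R c a \<and> valid_init \<mu> C (c 0) \<longrightarrow> (\<exists>t. c t \<in> Pf (c 0))"
  show "\<forall>c0. valid_init \<mu> C c0 \<longrightarrow> (\<forall>S. is_scc R c0 S \<longrightarrow> (\<exists>\<alpha>\<in>R. escapes \<alpha> S) \<or> S \<subseteq> Pf c0)"
  proof (intro allI impI)
    fix c0 S assume v: "valid_init \<mu> C c0" and scc: "is_scc R c0 S"
    show "(\<exists>\<alpha>\<in>R. escapes \<alpha> S) \<or> S \<subseteq> Pf c0"
    proof (rule ccontr)
      assume "\<not> ?thesis"
      then have ne: "\<not> (\<exists>\<alpha>\<in>R. escapes \<alpha> S)" and "\<not> S \<subseteq> Pf c0" by auto
      then obtain s where s: "s \<in> S" "s \<notin> Pf c0" by auto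
      have n0: "norm1 c0 \<ge> 1" using v unfolding valid_init_def by auto
      obtain c a where ca: "is_execution R c a" "weakly_fair R c a" "c 0 = c0" "\<forall>t. \<exists>y\<in>S. reach R (c t) y"
        using fair_exec[OF cp scc ne n0] by blast
      obtain t where t: "c t \<in> Pf c0" using corr ca v by metis
      obtain y where y: "y \<in> S" "reach R (c t) y" using ca(4) by blast
      have "reach R y s" using scc y s unfolding is_scc_def by blast
      then have "reach R (c t) s" using y reach_trans by metis
      then have "s \<in> Pf c0" using cl t by blast
      then show False using s by auto
    qed
  qed
next
  assume H: "\<forall>c0. valid_init \<mu> C c0 \<longrightarrow> (\<forall>S. is_scc R c0 S \<longrightarrow> (\<exists>\<alpha>\<in>R. escapes \<alpha> S) \<or> S \<subseteq> Pf c0)"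
  show "\<forall>c a. is_execution R c a \<and> weakly_fair R c a \<and> valid_init \<mu> C (c 0) \<longrightarrow> (\<exists>t. c t \<in> Pf (c 0))"
  proof (intro allI impI)
    fix c a assume h: "is_execution R c a \<and> weakly_fair R c a \<and> valid_init \<mu> C (c 0)"
    then show "\<exists>t. c t \<in> Pf (c 0)" using exec_reaches_P[OF fd, of c a "Pf (c 0)"] H by blast
  qed
qed

theorem lemma3p2:
  fixes R :: "('s::finite) reaction set"
    and \<mu> :: "'s \<Rightarrow> 'u"
    and C :: "(('u \<Rightarrow> nat) \<times> ('u \<Rightarrow> nat)) set"
  assumes "crn_protocol R"
    and "finite_density R"
  shows "(stably_correct R \<mu> C \<longleftrightarrow>
           (\<forall>c0. valid_init \<mu> C c0 \<longrightarrow>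
              (\<forall>S. is_scc R c0 S \<longrightarrow>
                 (\<exists>\<alpha>\<in>R. escapes \<alpha> S) \<or> S \<subseteq> stab R (Zset \<mu> C c0))))
       \<and> (haltingly_correct R \<mu> C \<longleftrightarrow>
           (\<forall>c0. valid_init \<mu> C c0 \<longrightarrow>
              (\<forall>S. is_scc R c0 S \<longrightarrow>
                 (\<exists>\<alpha>\<in>R. escapes \<alpha> S) \<or> S \<subseteq> halt R (Zset \<mu> C c0))))"
proof
  have cl1: "y \<in> stab R (Zset \<mu> C c0)" if "x \<in> stab R (Zset \<mu> C c0)" "reach R x y" for c0 x y
    using that reach_trans unfolding stab_def by blast
  show "stably_correct R \<mu> C \<longleftrightarrow>
           (\<forall>c0. valid_init \<mu> C c0 \<longrightarrow>
              (\<forall>S. is_scc R c0 S \<longrightarrow>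
                 (\<exists>\<alpha>\<in>R. escapes \<alpha> S) \<or> S \<subseteq> stab R (Zset \<mu> C c0)))"
    unfolding stably_correct_def
    by (rule generic_iff[OF assms, where Pf = "\<lambda>c0. stab R (Zset \<mu> C c0)"]) (rule cl1)
next
  have cl2: "y \<in> halt R (Zset \<mu> C c0)" if "x \<in> halt R (Zset \<mu> C c0)" "reach R x y" for c0 x y
    using that unfolding halt_def by auto
  show "haltingly_correct R \<mu> C \<longleftrightarrow>
           (\<forall>c0. valid_init \<mu> C c0 \<longrightarrow>
              (\<forall>S. is_scc R c0 S \<longrightarrow>
                 (\<exists>\<alpha>\<in>R. escapes \<alpha> S) \<or> S \<subseteq> halt R (Zset \<mu> C c0)))"
    unfolding haltingly_correct_def
    by (rule generic_iff[OF assms, where Pf = "\<lambda>c0. halt R (Zset \<mu> C c0)"]) (rule cl2)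
qed

end
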